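(* Let $\mathcal{H}$ be a finite-dimensional Hilbert space, $\{\rho_\theta;\theta\in\Theta\subset\mathbb{R}^d\}$ a smooth family of density operators, and $\theta_0\in\Theta$ with $\rho=\rho_{\theta_0}$ strictly positive. The following conditions are equivalent: (i) $\operatorname{span}_{\mathbb{R}}\{\partial_i\rho\}_{i=1}^d$ is $\mathcal{D}_\rho$ invariant; (ii) $\operatorname{span}_{\mathbb{R}}\{L_i^{(S)}\}_{i=1}^d$ is $\mathcal{D}_\rho$ invariant; (ii)' $\operatorname{span}_{\mathbb{C}}\{L_i^{(S)}\}_{i=1}^d$ is $\mathcal{D}_\rho$ invariant; (iii) $\operatorname{span}_{\mathbb{C}}\{L_i^{(S)}\}_{i=1}^d=\operatorname{span}_{\mathbb{C}}\{L_i^{(\beta)}\}_{i=1}^d$ for every $\beta\in[0,1]$; (iv) $(J^{(\beta)}_{\theta_0})^{-1}=(J^{(S)}_{\theta_0})^{-1}(\operatorname{Re}Z+\beta\sqrt{-1}\operatorname{Im}Z)(J^{(S)}_{\theta_0})^{-1}$ for every $\beta\in[0,1]$, where $Z=[\operatorname{Tr}L_i^{(S)}\rho L_j^{(S)}]_{ij}$.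
   Context: $\partial_i\rho=\frac{\partial}{\partial\theta^i}\rho_\theta|_{\theta=\theta_0}$. The commutation operator $\mathcal{D}_\rho$ on $\mathcal{B}(\mathcal{H})$ is defined by $\mathcal{D}_\rho(X)\rho+\rho\mathcal{D}_\rho(X)=\sqrt{-1}(X\rho-\rho X)$; a subspace $W$ is $\mathcal{D}_\rho$ invariant if $\mathcal{D}_\rho(W)\subset W$. For $\beta\in[0,1]$, $L_i^{(\beta)}$ is defined by $\partial_i\rho=\frac{1+\beta}{2}\rho L_i^{(\beta)}+\frac{1-\beta}{2}L_i^{(\beta)}\rho$, with $L_i^{(S)}=L_i^{(0)}$ the SLDs (assumed linearly independent). With $\langle X,Y\rangle^{(\beta)}=\frac12\operatorname{Tr}X^*\{(1+\beta)\rho Y+(1-\beta)Y\rho\}$, $J^{(\beta)}_{\theta_0}=[\langle L_i^{(\beta)},L_j^{(\beta)}\rangle^{(\beta)}]_{ij}$ and $J^{(S)}_{\theta_0}=J^{(0)}_{\theta_0}$. Re, Im entrywise. *)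

theory Defs
  imports "HOL-Analysis.Analysis"
begin

definition cscale :: "complex \<Rightarrow> complex^'n^'m \<Rightarrow> complex^'n^'m" where
  "cscale c A = (\<chi> i j. c * A $ i $ j)"

definition adjoint :: "complex^'n^'m \<Rightarrow> complex^'m^'n" where
  "adjoint A = (\<chi> i j. cnj (A $ j $ i))"

definition hermitian :: "complex^'n^'n \<Rightarrow> bool" where
  "hermitian A \<longleftrightarrow> adjoint A = A"

definition qform :: "complex^'n^'n \<Rightarrow> complex^'n \<Rightarrow> complex" where
  "qform A x = (\<Sum>i\<in>UNIV. cnj (x $ i) * (A *v x) $ i)"

definition density_op :: "complex^'n^'n \<Rightarrow> bool" where
  "density_op A \<longleftrightarrow> hermitian A \<and> (\<forall>x. 0 \<le> Re (qform A x)) \<and> trace A = 1"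

definition strictly_positive :: "complex^'n^'n \<Rightarrow> bool" where
  "strictly_positive A \<longleftrightarrow> hermitian A \<and> (\<forall>x. x \<noteq> 0 \<longrightarrow> 0 < Re (qform A x))"

definition pderiv_op :: "(real^'d \<Rightarrow> complex^'n^'n) \<Rightarrow> real^'d \<Rightarrow> 'd \<Rightarrow> complex^'n^'n" where
  "pderiv_op rf th0 i = frechet_derivative rf (at th0) (axis i 1)"

definition comm_op :: "complex^'n^'n \<Rightarrow> complex^'n^'n \<Rightarrow> complex^'n^'n" where
  "comm_op rho X = (THE Y. Y ** rho + rho ** Y = cscale \<i> (X ** rho - rho ** X))"

definition D_invariant :: "complex^'n^'n \<Rightarrow> (complex^'n^'n) set \<Rightarrow> bool" where
  "D_invariant rho W \<longleftrightarrow> comm_op rho ` W \<subseteq> W"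

definition cspan :: "(complex^'n^'m) set \<Rightarrow> (complex^'n^'m) set" where
  "cspan S = module.span cscale S"

definition Lbeta :: "real \<Rightarrow> complex^'n^'n \<Rightarrow> complex^'n^'n \<Rightarrow> complex^'n^'n" where
  "Lbeta b rho dr = (THE L. dr = ((1 + b) / 2) *\<^sub>R (rho ** L) + ((1 - b) / 2) *\<^sub>R (L ** rho))"

definition inner_beta :: "real \<Rightarrow> complex^'n^'n \<Rightarrow> complex^'n^'n \<Rightarrow> complex^'n^'n \<Rightarrow> complex" where
  "inner_beta b rho X Y =
     (1/2) * trace (adjoint X ** ((1 + b) *\<^sub>R (rho ** Y) + (1 - b) *\<^sub>R (Y ** rho)))"

definition Jbeta :: "real \<Rightarrow> complex^'n^'n \<Rightarrow> ('d \<Rightarrow> complex^'n^'n) \<Rightarrow> complex^'d^'d" where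
  "Jbeta b rho dr = (\<chi> i j. inner_beta b rho (Lbeta b rho (dr i)) (Lbeta b rho (dr j)))"

definition Re_mat :: "complex^'d^'d \<Rightarrow> complex^'d^'d" where
  "Re_mat Z = (\<chi> i j. complex_of_real (Re (Z $ i $ j)))"

definition Im_mat :: "complex^'d^'d \<Rightarrow> complex^'d^'d" where
  "Im_mat Z = (\<chi> i j. complex_of_real (Im (Z $ i $ j)))"

end

theory Submission
  imports Defs
begin

lemma cscale_nth[simp]: "cscale c A $ i $ j = c * A $ i $ j" by (simp add: cscale_def)
lemma adjoint_nth[simp]: "adjoint A $ i $ j = cnj (A $ j $ i)" by (simp add: adjoint_def)
lemma mmult_nth: "(A ** B) $ i $ j = (\<Sum>k\<in>UNIV. A$i$k * B$k$j)" by (simp add: matrix_matrix_mult_def)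

lemma adjoint_adjoint[simp]: "adjoint (adjoint A) = A" by (simp add: vec_eq_iff)
lemma adjoint_add: "adjoint (A + B) = adjoint A + adjoint B" by (simp add: vec_eq_iff)
lemma adjoint_diff: "adjoint (A - B) = adjoint A - adjoint B" by (simp add: vec_eq_iff)
lemma adjoint_uminus: "adjoint (- A) = - adjoint A" by (simp add: vec_eq_iff)
lemma adjoint_zero[simp]: "adjoint 0 = 0" by (simp add: vec_eq_iff)
lemma adjoint_scaleR: "adjoint (r *\<^sub>R A) = r *\<^sub>R adjoint A" by (simp add: vec_eq_iff)
lemma adjoint_cscale: "adjoint (cscale c A) = cscale (cnj c) (adjoint A)" by (simp add: vec_eq_iff)
lemma adjoint_mult: "adjoint (A ** B) = adjoint B ** adjoint A"
  by (simp add: vec_eq_iff mmult_nth mult.commute)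
lemma adjoint_sum: "adjoint (sum f S) = (\<Sum>x\<in>S. adjoint (f x))"
  by (induct S rule: infinite_finite_induct) (auto simp: adjoint_add)
lemma adjoint_mat1[simp]: "adjoint (mat 1) = mat 1" by (simp add: vec_eq_iff mat_def)

lemma cscale_add_right: "cscale c (A + B) = cscale c A + cscale c B" by (simp add: vec_eq_iff algebra_simps)
lemma cscale_add_left: "cscale (c + d) A = cscale c A + cscale d A" by (simp add: vec_eq_iff algebra_simps)
lemma cscale_diff_right: "cscale c (A - B) = cscale c A - cscale c B" by (simp add: vec_eq_iff algebra_simps)
lemma cscale_diff_left: "cscale (c - d) A = cscale c A - cscale d A" by (simp add: vec_eq_iff algebra_simps)
lemma cscale_uminus_left: "cscale (- c) A = - cscale c A" by (simp add: vec_eq_iff)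
lemma cscale_uminus_right: "cscale c (- A) = - cscale c A" by (simp add: vec_eq_iff)
lemma cscale_cscale[simp]: "cscale c (cscale d A) = cscale (c * d) A" by (simp add: vec_eq_iff)
lemma cscale_one[simp]: "cscale 1 A = A" by (simp add: vec_eq_iff)
lemma cscale_zero_left[simp]: "cscale 0 A = 0" by (simp add: vec_eq_iff)
lemma cscale_zero_right[simp]: "cscale c 0 = 0" by (simp add: vec_eq_iff)
lemma scaleR_nth[simp]: "(r *\<^sub>R (A::complex^'n^'m)) $ i $ j = of_real r * A $ i $ j"
  by (simp only: vector_scaleR_component) (simp add: scaleR_conv_of_real)
lemma cscale_of_real: "cscale (of_real r) A = r *\<^sub>R A" by (simp add: vec_eq_iff del: vector_scaleR_component)
lemma scaleR_cscale: "r *\<^sub>R A = cscale (of_real r) A" by (simp add: cscale_of_real)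
lemma cscale_mult_left: "cscale c A ** B = cscale c (A ** B)"
  by (simp add: vec_eq_iff mmult_nth sum_distrib_left mult.assoc)
lemma cscale_mult_right: "A ** cscale c B = cscale c (A ** B)"
  by (simp add: vec_eq_iff mmult_nth sum_distrib_left mult_ac)
lemma cscale_sum_right: "cscale c (sum f S) = (\<Sum>x\<in>S. cscale c (f x))"
  by (induct S rule: infinite_finite_induct) (auto simp: cscale_add_right)
lemma cscale_sum_left: "cscale (sum f S) A = (\<Sum>x\<in>S. cscale (f x) A)"
  by (induct S rule: infinite_finite_induct) (auto simp: cscale_add_left)

lemma mmult_add_right: "A ** (B + C) = A ** B + A ** C" by (rule matrix_add_ldistrib)
lemma mmult_add_left: "(A + B) ** C = A ** C + B ** (C::'a::semiring_1^_^_)"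
  by (vector matrix_matrix_mult_def sum.distrib[symmetric] field_simps)
lemma mmult_diff_right: "A ** (B - C) = A ** B - A ** (C::'a::ring_1^_^_)"
  by (vector matrix_matrix_mult_def sum_subtractf[symmetric] field_simps)
lemma mmult_diff_left: "(A - B) ** C = A ** C - B ** (C::'a::ring_1^_^_)"
  by (vector matrix_matrix_mult_def sum_subtractf[symmetric] field_simps)
lemma mmult_sum_right: "A ** sum f S = (\<Sum>x\<in>S. A ** (f x::'a::semiring_1^_^_))"
  by (induct S rule: infinite_finite_induct) (auto simp: matrix_add_ldistrib)
lemma mmult_sum_left: "sum f S ** A = (\<Sum>x\<in>S. (f x::'a::semiring_1^_^_) ** A)"
  by (induct S rule: infinite_finite_induct) (auto simp: mmult_add_left)
lemma mmult_scaleR_left: "(r *\<^sub>R A) ** B = r *\<^sub>R (A ** (B::complex^_^_))"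
  by (simp add: scalar_matrix_assoc)
lemma mmult_scaleR_right: "A ** (r *\<^sub>R B) = r *\<^sub>R (A ** (B::complex^_^_))"
  by (simp add: matrix_scalar_ac scalar_matrix_assoc)

lemma trace_cscale: "trace (cscale c A) = c * trace A" by (simp add: trace_def sum_distrib_left)
lemma trace_scaleR: "trace (r *\<^sub>R (A::complex^'n^'n)) = of_real r * trace A"
  by (simp add: trace_def sum_distrib_left del: vector_scaleR_component)
lemma trace_sum: "trace (sum f S) = (\<Sum>x\<in>S. trace (f x::'a::comm_semiring_1^_^_))"
  by (induct S rule: infinite_finite_induct) (auto simp: trace_add trace_0[simplified])
lemma trace_adjoint: "trace (adjoint A) = cnj (trace A)" by (simp add: trace_def)
lemma trace_uminus: "trace (- (A::complex^'n^'n)) = - trace A" by (simp add: trace_def sum_negf)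

interpretation cmod: module "cscale :: complex \<Rightarrow> complex^'n^'m \<Rightarrow> complex^'n^'m"
  by unfold_locales (simp_all add: cscale_add_right cscale_add_left)

lemma (in module) span_range_finite:
  assumes "finite (UNIV::'i set)"
  shows "span (range (f::'i \<Rightarrow> 'b)) = range (\<lambda>c. \<Sum>i\<in>UNIV. scale (c i) (f i))"
proof
  show "range (\<lambda>c. \<Sum>i\<in>UNIV. scale (c i) (f i)) \<subseteq> span (range f)"
    by (clarsimp, rule span_sum, rule span_scale, rule span_base, simp)
  show "span (range f) \<subseteq> range (\<lambda>c. \<Sum>i\<in>UNIV. scale (c i) (f i))"
  proof
    fix x assume "x \<in> span (range f)"
    then show "x \<in> range (\<lambda>c. \<Sum>i\<in>UNIV. scale (c i) (f i))"
    proof (induction rule: span_induct_alt)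
      case base
      have "0 = (\<Sum>i\<in>UNIV. scale (0::'a) (f i))" by simp
      then show ?case by (rule range_eqI[where x="\<lambda>i. 0"])
    next
      case (step c x y)
      then obtain j where j: "x = f j" by blast
      from step obtain d where d: "y = (\<Sum>i\<in>UNIV. scale (d i) (f i))" by blast
      have e1: "(\<Sum>i\<in>UNIV. scale (if i = j then c else 0) (f i)) = (\<Sum>i\<in>UNIV. if i = j then scale c (f j) else 0)"
        by (rule sum.cong) simp_all
      have e2: "(\<Sum>i\<in>UNIV. if i = j then scale c (f j) else 0) = scale c (f j)"
        using assms by simp
      have "(\<Sum>i\<in>UNIV. scale (d i + (if i = j then c else 0)) (f i))
          = (\<Sum>i\<in>UNIV. scale (d i) (f i)) + (\<Sum>i\<in>UNIV. scale (if i = j then c else 0) (f i))"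
        by (simp only: scale_left_distrib sum.distrib)
      also have "\<dots> = y + scale c x" unfolding e1 e2 d j ..
      finally have "scale c x + y = (\<Sum>i\<in>UNIV. scale (d i + (if i = j then c else 0)) (f i))"
        by (simp only: add.commute)
      then show ?case by (rule range_eqI[where x="\<lambda>i. d i + (if i = j then c else 0)"])
    qed
  qed
qed

lemma cspan_range: "cspan (range (f::'i::finite \<Rightarrow> complex^'n^'m)) = range (\<lambda>c. \<Sum>i\<in>UNIV. cscale (c i) (f i))"
  unfolding cspan_def by (rule cmod.span_range_finite) simp

lemma rspan_range: "span (range (f::'i::finite \<Rightarrow> 'a::real_vector)) = range (\<lambda>c. \<Sum>i\<in>UNIV. c i *\<^sub>R f i)"
  by (rule real_vector.span_range_finite) simp

definition Tab :: "complex^'n^'n \<Rightarrow> real \<Rightarrow> real \<Rightarrow> complex^'n^'n \<Rightarrow> complex^'n^'n" where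
  "Tab rho a b Y = a *\<^sub>R (rho ** Y) + b *\<^sub>R (Y ** rho)"

definition hs :: "complex^'n^'m \<Rightarrow> complex^'n^'m \<Rightarrow> complex" where
  "hs X Y = trace (adjoint X ** Y)"

lemma hs_add_left: "hs (X + X') Y = hs X Y + hs X' Y"
  by (simp add: hs_def adjoint_add mmult_add_left trace_add)
lemma hs_add_right: "hs X (Y + Y') = hs X Y + hs X Y'"
  by (simp add: hs_def matrix_add_ldistrib trace_add)
lemma hs_diff_left: "hs (X - X') Y = hs X Y - hs X' Y"
  by (simp add: hs_def adjoint_diff mmult_diff_left trace_sub)
lemma hs_diff_right: "hs X (Y - Y') = hs X Y - hs X Y'"
  by (simp add: hs_def mmult_diff_right trace_sub)
lemma hs_cscale_left: "hs (cscale c X) Y = cnj c * hs X Y"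
  by (simp add: hs_def adjoint_cscale cscale_mult_left trace_cscale)
lemma hs_cscale_right: "hs X (cscale c Y) = c * hs X Y"
  by (simp add: hs_def cscale_mult_right trace_cscale)
lemma hs_scaleR_right: "hs X (r *\<^sub>R Y) = of_real r * hs X Y"
  by (simp add: hs_def mmult_scaleR_right trace_scaleR)
lemma hs_zero_left[simp]: "hs 0 Y = 0" by (simp add: hs_def trace_0[simplified])
lemma hs_zero_right[simp]: "hs X 0 = 0" by (simp add: hs_def trace_0[simplified])
lemma hs_sum_left: "hs (sum f S) Y = (\<Sum>x\<in>S. hs (f x) Y)"
  by (induct S rule: infinite_finite_induct) (auto simp: hs_add_left)
lemma hs_sum_right: "hs X (sum f S) = (\<Sum>x\<in>S. hs X (f x))"
  by (induct S rule: infinite_finite_induct) (auto simp: hs_add_right)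
lemma hs_sym: "hs Y X = cnj (hs X Y)"
proof -
  have "cnj (hs X Y) = trace (adjoint (adjoint X ** Y))" by (simp add: hs_def trace_adjoint)
  also have "\<dots> = trace (adjoint Y ** X)" by (simp add: adjoint_mult)
  finally show ?thesis by (simp add: hs_def)
qed

lemma Tab_add: "Tab rho a b (X + Y) = Tab rho a b X + Tab rho a b Y"
  by (simp add: Tab_def matrix_add_ldistrib mmult_add_left scaleR_add_right)
lemma Tab_diff: "Tab rho a b (X - Y) = Tab rho a b X - Tab rho a b Y"
  by (simp add: Tab_def mmult_diff_right mmult_diff_left scaleR_diff_right)
lemma Tab_scaleR: "Tab rho a b (r *\<^sub>R X) = r *\<^sub>R Tab rho a b X"
  by (simp add: Tab_def mmult_scaleR_right mmult_scaleR_left scaleR_add_right mult.commute)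
lemma Tab_cscale: "Tab rho a b (cscale c X) = cscale c (Tab rho a b X)"
  by (simp add: Tab_def cscale_mult_right cscale_mult_left scaleR_cscale cscale_add_right mult.commute)
lemma Tab_zero[simp]: "Tab rho a b 0 = 0" by (simp add: Tab_def)
lemma Tab_sum: "Tab rho a b (sum f S) = (\<Sum>x\<in>S. Tab rho a b (f x))"
  by (induct S rule: infinite_finite_induct) (auto simp: Tab_add)
lemma linear_Tab: "linear (Tab rho a b)"
  by (rule linearI) (simp_all add: Tab_add Tab_scaleR)

locale spos =
  fixes rho :: "complex^'n^'n"
  assumes herm: "hermitian rho"
    and pos: "\<forall>x. x \<noteq> 0 \<longrightarrow> 0 < Re (qform rho x)"
begin

lemma rho_adj[simp]: "adjoint rho = rho" using herm by (simp add: hermitian_def)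

lemma qform_nonneg: "0 \<le> Re (qform rho x)"
proof (cases "x = 0")
  case True then show ?thesis by (simp add: qform_def)
next
  case False then show ?thesis using pos by (simp add: less_imp_le)
qed

lemma trace_quad: "trace (adjoint Y ** rho ** Y) = (\<Sum>k\<in>UNIV. qform rho (column k Y))"
proof -
  have "trace (adjoint Y ** rho ** Y) = (\<Sum>k\<in>UNIV. \<Sum>l\<in>UNIV. \<Sum>i\<in>UNIV. cnj (Y$i$k) * rho$i$l * Y$l$k)"
    by (simp add: trace_def mmult_nth sum_distrib_right)
  also have "\<dots> = (\<Sum>k\<in>UNIV. \<Sum>i\<in>UNIV. \<Sum>l\<in>UNIV. cnj (Y$i$k) * rho$i$l * Y$l$k)"
    by (rule sum.cong[OF refl], rule sum.swap)
  also have "\<dots> = (\<Sum>k\<in>UNIV. qform rho (column k Y))"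
    by (simp add: qform_def matrix_vector_mult_def column_def sum_distrib_left mult.assoc)
  finally show ?thesis .
qed

lemma quad_nonneg: "0 \<le> Re (trace (adjoint Y ** rho ** Y))"
  unfolding trace_quad Re_sum by (rule sum_nonneg) (rule qform_nonneg)

lemma quad_zero: assumes "Re (trace (adjoint Y ** rho ** Y)) = 0" shows "Y = 0"
proof -
  have "\<forall>k\<in>UNIV. Re (qform rho (column k Y)) = 0"
    using assms unfolding trace_quad Re_sum
    by (subst sum_nonneg_eq_0_iff[symmetric]) (simp_all add: qform_nonneg)
  then have "\<forall>k. column k Y = 0" using pos by (metis UNIV_I less_irrefl)
  then show ?thesis by (simp add: vec_eq_iff column_def)
qed

lemma hs_Tab_self: "hs Y (Tab rho a b Y) = of_real a * trace (adjoint Y ** rho ** Y)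
    + of_real b * trace (adjoint (adjoint Y) ** rho ** adjoint Y)"
proof -
  have "trace (adjoint Y ** (Y ** rho)) = trace (Y ** rho ** adjoint Y)"
    by (simp add: trace_mul_sym[of "adjoint Y"])
  then show ?thesis
    by (simp add: hs_def Tab_def matrix_add_ldistrib trace_add mmult_scaleR_right trace_scaleR matrix_mul_assoc)
qed

lemma hs_Tab_self_Re: "Re (hs Y (Tab rho a b Y)) = a * Re (trace (adjoint Y ** rho ** Y))
    + b * Re (trace (adjoint (adjoint Y) ** rho ** adjoint Y))"
  unfolding hs_Tab_self by simp

lemma hs_Tab_pos: assumes "0 \<le> a" "0 \<le> b" "0 < a + b" "Y \<noteq> 0"
  shows "0 < Re (hs Y (Tab rho a b Y))"
proof -
  have p1: "0 \<le> Re (trace (adjoint Y ** rho ** Y))" by (rule quad_nonneg)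
  have p2: "0 \<le> Re (trace (adjoint (adjoint Y) ** rho ** adjoint Y))" by (rule quad_nonneg)
  have n1: "Re (trace (adjoint Y ** rho ** Y)) \<noteq> 0" using quad_zero assms(4) by blast
  have n2: "Re (trace (adjoint (adjoint Y) ** rho ** adjoint Y)) \<noteq> 0"
    using quad_zero[of "adjoint Y"] assms(4) by (metis adjoint_adjoint adjoint_zero)
  have "0 < a \<or> 0 < b" using assms by linarith
  then show ?thesis unfolding hs_Tab_self_Re
    using p1 p2 n1 n2 assms(1,2)
    by (smt (verit) mult_nonneg_nonneg mult_pos_pos)
qed

lemma Tab_inj0: assumes "0 \<le> a" "0 \<le> b" "0 < a + b" "Tab rho a b Y = 0" shows "Y = 0"
  using hs_Tab_pos[OF assms(1-3), of Y] assms(4) by fastforce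

lemma Tab_inj: assumes "0 \<le> a" "0 \<le> b" "0 < a + b" "Tab rho a b X = Tab rho a b Y" shows "X = Y"
  using Tab_inj0[OF assms(1-3), of "X - Y"] assms(4) by (simp add: Tab_diff)

lemma Tab_ex1: assumes "0 \<le> a" "0 \<le> b" "0 < a + b" shows "\<exists>!Y. Tab rho a b Y = Z"
proof -
  have "inj (Tab rho a b)" using Tab_inj[OF assms] by (auto intro: injI)
  then have "surj (Tab rho a b)" using linear_injective_imp_surjective[OF linear_Tab] by blast
  then obtain Y where "Tab rho a b Y = Z" by (metis surjD)
  then show ?thesis using Tab_inj[OF assms] by blast
qed

end

context spos begin

abbreviation "S \<equiv> Tab rho (1/2) (1/2)"
abbreviation "T b \<equiv> Tab rho ((1+b)/2) ((1-b)/2)"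
abbreviation "D \<equiv> comm_op rho"
definition E :: "real \<Rightarrow> complex^'n^'n \<Rightarrow> complex^'n^'n" where
  "E b X = X + cscale (\<i> * of_real b) (D X)"

lemma Tab_mult_right: "Tab rho a b (X ** rho) = Tab rho a b X ** rho"
  by (simp add: Tab_def mmult_add_left mmult_scaleR_left matrix_mul_assoc)
lemma Tab_mult_left: "Tab rho a b (rho ** X) = rho ** Tab rho a b X"
  by (simp add: Tab_def matrix_add_ldistrib mmult_scaleR_right matrix_mul_assoc)
lemma Tab_adjoint: "adjoint (Tab rho a b Y) = Tab rho b a (adjoint Y)"
  by (simp add: Tab_def adjoint_add adjoint_scaleR adjoint_mult add.commute)
lemma hs_Tab_sym: "hs X (Tab rho a b Y) = hs (Tab rho a b X) Y"
proof -
  have "trace (rho ** adjoint X ** Y) = trace (adjoint X ** Y ** rho)"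
    by (metis matrix_mul_assoc trace_mul_sym)
  then show ?thesis
    by (simp add: hs_def Tab_def adjoint_add adjoint_scaleR adjoint_mult matrix_add_ldistrib
      mmult_add_left mmult_scaleR_right mmult_scaleR_left trace_add trace_scaleR matrix_mul_assoc)
qed
lemma hs_Tab_herm: "hs X (Tab rho a b Y) = cnj (hs Y (Tab rho a b X))"
  by (metis hs_Tab_sym hs_sym)

lemma pos_ab: "0 \<le> (b::real) \<Longrightarrow> b \<le> 1 \<Longrightarrow> 0 \<le> (1+b)/2 \<and> 0 \<le> (1-b)/2 \<and> 0 < (1+b)/2 + (1-b)/2"
  by (auto simp: field_simps)

lemma S_inj: "S X = S Y \<Longrightarrow> X = Y" by (rule Tab_inj) auto
lemma T_inj: "0 \<le> b \<Longrightarrow> b \<le> 1 \<Longrightarrow> T b X = T b Y \<Longrightarrow> X = Y"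
  using pos_ab[of b] Tab_inj by blast

lemma comm_op_char: "D X = (THE Y. Tab rho 1 1 Y = cscale \<i> (X ** rho - rho ** X))"
  unfolding comm_op_def Tab_def by (simp add: add.commute)

lemma D_eq: "Tab rho 1 1 (D X) = cscale \<i> (X ** rho - rho ** X)"
  unfolding comm_op_char by (rule theI') (rule Tab_ex1, auto)

lemma D_unique: "Tab rho 1 1 Y = cscale \<i> (X ** rho - rho ** X) \<Longrightarrow> D X = Y"
  using D_eq by (metis Tab_inj zero_le_one zero_less_one add_pos_pos)

lemma Tab11: "Tab rho 1 1 Y = 2 *\<^sub>R S Y"
  by (simp add: Tab_def scaleR_add_right)

lemma D_S: "S (D X) = cscale (\<i>/2) (X ** rho - rho ** X)"
proof -
  have "2 *\<^sub>R S (D X) = cscale \<i> (X ** rho - rho ** X)" using D_eq Tab11 by metis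
  then have "(1/2::real) *\<^sub>R (2 *\<^sub>R S (D X)) = (1/2::real) *\<^sub>R cscale \<i> (X ** rho - rho ** X)" by simp
  then show ?thesis by (simp add: scaleR_cscale)
qed

lemma D_add: "D (X + Y) = D X + D Y"
  by (rule D_unique) (simp add: Tab_add D_eq mmult_add_left matrix_add_ldistrib
       flip: cscale_add_right, simp add: algebra_simps)
lemma D_cscale: "D (cscale c X) = cscale c (D X)"
  by (rule D_unique) (simp add: Tab_cscale D_eq cscale_mult_left cscale_mult_right
       cscale_diff_right mult.commute)
lemma D_zero[simp]: "D 0 = 0" using D_cscale[of 0 0] by simp
lemma D_diff: "D (X - Y) = D X - D Y"
  using D_add[of "X - Y" Y] by (simp add: algebra_simps)
lemma D_sum: "D (sum f A) = (\<Sum>x\<in>A. D (f x))"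
  by (induct A rule: infinite_finite_induct) (auto simp: D_add)
lemma D_lin: "D (\<Sum>i\<in>A. cscale (c i) (f i)) = (\<Sum>i\<in>A. cscale (c i) (D (f i)))"
  by (simp add: D_sum D_cscale)

lemma D_herm: assumes "adjoint X = X" shows "adjoint (D X) = D X"
proof -
  have "Tab rho 1 1 (adjoint (D X)) = adjoint (Tab rho 1 1 (D X))" by (simp add: Tab_adjoint)
  also have "\<dots> = cscale \<i> (X ** rho - rho ** X)"
    by (simp add: D_eq adjoint_cscale adjoint_diff adjoint_mult assms cscale_diff_right cscale_uminus_left)
  finally show ?thesis using D_unique by metis
qed

lemma S_D_comm: "D (S X) = S (D X)"
proof (rule D_unique)
  have "Tab rho 1 1 (S (D X)) = S (Tab rho 1 1 (D X))"
    by (simp add: Tab_def matrix_add_ldistrib mmult_add_left mmult_scaleR_right mmult_scaleR_left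
          matrix_mul_assoc algebra_simps)
  also have "\<dots> = cscale \<i> (S X ** rho - rho ** S X)"
    by (simp add: D_eq Tab_cscale Tab_diff Tab_mult_right Tab_mult_left)
  finally show "Tab rho 1 1 (S (D X)) = cscale \<i> (S X ** rho - rho ** S X)" .
qed

lemma T_S_E: "T b X = S (E b X)"
proof -
  have "S (E b X) = S X + cscale (\<i> * of_real b) (cscale (\<i>/2) (X ** rho - rho ** X))"
    by (simp add: E_def Tab_add Tab_cscale D_S)
  also have "\<dots> = T b X"
    by (simp add: Tab_def vec_eq_iff) (simp add: scaleR_conv_of_real field_simps)
  finally show ?thesis by simp
qed

lemma E_add: "E b (X + Y) = E b X + E b Y"
  by (simp add: E_def D_add cscale_add_right)
lemma E_cscale: "E b (cscale c X) = cscale c (E b X)"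
  by (simp add: E_def D_cscale cscale_add_right mult.commute)
lemma E_zero[simp]: "E b 0 = 0" by (simp add: E_def)
lemma E_sum: "E b (sum f A) = (\<Sum>x\<in>A. E b (f x))"
  by (induct A rule: infinite_finite_induct) (auto simp: E_add)
lemma E_lin: "E b (\<Sum>i\<in>A. cscale (c i) (f i)) = (\<Sum>i\<in>A. cscale (c i) (E b (f i)))"
  by (simp add: E_sum E_cscale)
lemma E0[simp]: "E 0 X = X" by (simp add: E_def)

lemma E_inj0: "0 \<le> b \<Longrightarrow> b \<le> 1 \<Longrightarrow> E b X = 0 \<Longrightarrow> X = 0"
  using pos_ab[of b] Tab_inj0[of "(1+b)/2" "(1-b)/2" X] by (auto simp: T_S_E)

lemma Lbeta_char: "Lbeta b rho Z = (THE L. T b L = Z)"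
  unfolding Lbeta_def Tab_def by (metis)

lemma Lbeta_eq: "0 \<le> b \<Longrightarrow> b \<le> 1 \<Longrightarrow> T b (Lbeta b rho Z) = Z"
  unfolding Lbeta_char by (rule theI') (use pos_ab[of b] Tab_ex1 in blast)

lemma Lbeta_unique: "0 \<le> b \<Longrightarrow> b \<le> 1 \<Longrightarrow> T b L = Z \<Longrightarrow> Lbeta b rho Z = L"
  using Lbeta_eq T_inj by metis

lemma Lbeta0_eq: "S (Lbeta 0 rho Z) = Z" using Lbeta_eq[of 0 Z] by simp

lemma E_Lbeta: "0 \<le> b \<Longrightarrow> b \<le> 1 \<Longrightarrow> E b (Lbeta b rho Z) = Lbeta 0 rho Z"
  by (rule S_inj) (simp add: Lbeta0_eq Lbeta_eq flip: T_S_E)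

lemma Lbeta_herm: "adjoint Z = Z \<Longrightarrow> adjoint (Lbeta 0 rho Z) = Lbeta 0 rho Z"
proof -
  assume a: "adjoint Z = Z"
  have "S (adjoint (Lbeta 0 rho Z)) = Z"
    using Tab_adjoint[of "1/2" "1/2" "Lbeta 0 rho Z"] Lbeta0_eq a by metis
  then show ?thesis using Lbeta0_eq S_inj by metis
qed

lemma D_antisym: "hs (D X) (S Y) = - hs X (S (D Y))"
proof -
  have t: "trace (rho ** adjoint X ** Y) = trace (adjoint X ** Y ** rho)"
    by (metis matrix_mul_assoc trace_mul_sym)
  have "hs (D X) (S Y) = hs (S (D X)) Y" by (simp add: hs_Tab_sym)
  also have "\<dots> = cnj (\<i>/2) * (trace (rho ** adjoint X ** Y) - trace (adjoint X ** rho ** Y))"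
    by (simp only: D_S hs_cscale_left) (simp add: hs_def adjoint_diff adjoint_mult mmult_diff_left trace_sub)
  also have "\<dots> = - ((\<i>/2) * (trace (adjoint X ** Y ** rho) - trace (adjoint X ** rho ** Y)))"
    by (simp add: t)
  also have "\<dots> = - hs X (S (D Y))"
    by (simp only: D_S hs_cscale_right) (simp add: hs_def mmult_diff_right trace_sub matrix_mul_assoc)
  finally show ?thesis .
qed

end

lemma complex_scaleR_eq: "r *\<^sub>R (z::complex) = of_real r * z" by (rule scaleR_conv_of_real)

lemma cscale_decomp: "cscale c A = Re c *\<^sub>R A + cscale \<i> (Im c *\<^sub>R A)"
proof -
  have "c = of_real (Re c) + \<i> * of_real (Im c)" by (simp add: complex_eq_iff)
  then show ?thesis
    by (simp add: vec_eq_iff complex_scaleR_eq) (metis distrib_right mult.assoc)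
qed

lemma cmod_span_range_sub:
  assumes "\<And>i. f i \<in> cspan (range g)"
  shows "cspan (range f) \<subseteq> cspan (range g)"
  unfolding cspan_def by (rule cmod.span_minimal) (use assms in \<open>auto simp: cspan_def\<close>)

lemma cspan_lin: "(\<And>i. f i \<in> cspan A) \<Longrightarrow> (\<Sum>i\<in>UNIV. cscale (c i) (f i)) \<in> cspan A"
  unfolding cspan_def by (intro cmod.span_sum cmod.span_scale) auto

lemma cspan_add: "x \<in> cspan A \<Longrightarrow> y \<in> cspan A \<Longrightarrow> x + y \<in> cspan A"
  unfolding cspan_def by (rule cmod.span_add)
lemma cspan_diff: "x \<in> cspan A \<Longrightarrow> y \<in> cspan A \<Longrightarrow> x - y \<in> cspan A"
  unfolding cspan_def by (rule cmod.span_diff)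
lemma cspan_scale: "x \<in> cspan A \<Longrightarrow> cscale c x \<in> cspan A"
  unfolding cspan_def by (rule cmod.span_scale)
lemma cspan_base: "x \<in> A \<Longrightarrow> x \<in> cspan A"
  unfolding cspan_def by (rule cmod.span_base)

locale sld = spos rho for rho :: "complex^'n^'n" +
  fixes dr :: "'d::finite \<Rightarrow> complex^'n^'n"
  assumes dr_herm: "\<And>i. adjoint (dr i) = dr i"
    and indep: "\<forall>c::'d \<Rightarrow> real. (\<Sum>i\<in>UNIV. c i *\<^sub>R Lbeta 0 rho (dr i)) = 0 \<longrightarrow> (\<forall>i. c i = 0)"
begin

abbreviation "L i \<equiv> Lbeta 0 rho (dr i)"
abbreviation "Lb b i \<equiv> Lbeta b rho (dr i)"
definition lcv :: "complex^'d \<Rightarrow> complex^'n^'n" where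
  "lcv v = (\<Sum>i\<in>UNIV. cscale (v$i) (L i))"
abbreviation "VC \<equiv> cspan (range L)"
abbreviation "VR \<equiv> span (range L)"

lemma L_herm: "adjoint (L i) = L i" using Lbeta_herm dr_herm by blast
lemma S_L: "S (L i) = dr i" by (rule Lbeta0_eq)

lemma VC_eq: "VC = range lcv"
  unfolding cspan_range
proof (rule set_eqI, rule iffI)
  fix X assume "X \<in> range (\<lambda>c. \<Sum>i\<in>UNIV. cscale (c i) (L i))"
  then obtain c where "X = (\<Sum>i\<in>UNIV. cscale (c i) (L i))" by blast
  then have "X = lcv (vec_lambda c)" by (simp add: lcv_def)
  then show "X \<in> range lcv" by blast
next
  fix X assume "X \<in> range lcv"
  then obtain v where "X = lcv v" by blast
  then have "X = (\<lambda>c. \<Sum>i\<in>UNIV. cscale (c i) (L i)) (\<lambda>i. v$i)" by (simp add: lcv_def)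
  then show "X \<in> range (\<lambda>c. \<Sum>i\<in>UNIV. cscale (c i) (L i))" by blast
qed

lemma lcv_in: "lcv v \<in> VC" using VC_eq by auto
lemma L_in: "L i \<in> VC" by (rule cspan_base) auto

definition Rp :: "complex^'d \<Rightarrow> complex^'n^'n" where "Rp v = (\<Sum>i\<in>UNIV. Re (v$i) *\<^sub>R L i)"
definition Ip :: "complex^'d \<Rightarrow> complex^'n^'n" where "Ip v = (\<Sum>i\<in>UNIV. Im (v$i) *\<^sub>R L i)"

lemma lcv_decomp: "lcv v = Rp v + cscale \<i> (Ip v)"
  unfolding lcv_def Rp_def Ip_def
  by (subst cscale_decomp) (simp add: sum.distrib cscale_sum_right)

lemma Rp_herm: "adjoint (Rp v) = Rp v" by (simp add: Rp_def adjoint_sum adjoint_scaleR L_herm)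
lemma Ip_herm: "adjoint (Ip v) = Ip v" by (simp add: Ip_def adjoint_sum adjoint_scaleR L_herm)

lemma lcv_adj: "adjoint (lcv v) = Rp v - cscale \<i> (Ip v)"
  by (simp add: lcv_decomp adjoint_add adjoint_cscale Rp_herm Ip_herm cscale_uminus_left)

lemma Rp_in: "Rp v \<in> VR" unfolding Rp_def by (intro span_sum span_scale span_base) auto
lemma Ip_in: "Ip v \<in> VR" unfolding Ip_def by (intro span_sum span_scale span_base) auto

lemma cscale_i_zero: "cscale \<i> X = 0 \<Longrightarrow> X = 0"
  by (metis cscale_cscale cscale_one cscale_zero_right i_squared mult_minus1 cscale_uminus_left neg_equal_0_iff_equal)

lemma lcv_zero: assumes "lcv v = 0" shows "v = 0"
proof -
  have a: "adjoint (lcv v) = 0" using assms by simp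
  have "Rp v + cscale \<i> (Ip v) = 0" using assms by (simp only: lcv_decomp)
  moreover have "Rp v - cscale \<i> (Ip v) = 0" using a by (simp only: lcv_adj)
  ultimately have h: "Rp v + cscale \<i> (Ip v) = 0" "Rp v - cscale \<i> (Ip v) = 0" by auto
  have "(Rp v + cscale \<i> (Ip v)) - (Rp v - cscale \<i> (Ip v)) = (2::real) *\<^sub>R cscale \<i> (Ip v)"
    by (simp add: scaleR_2)
  then have "cscale \<i> (Ip v) = 0" using h by simp
  moreover then have "Rp v = 0" using h by simp
  ultimately have "Rp v = 0" "cscale \<i> (Ip v) = 0" by auto
  then have r: "Rp v = 0" and i: "Ip v = 0" using cscale_i_zero by auto
  have "\<forall>i. Re (v$i) = 0" using spec[OF indep, of "\<lambda>i. Re (v$i)"] r unfolding Rp_def by blast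
  moreover have "\<forall>i. Im (v$i) = 0" using spec[OF indep, of "\<lambda>i. Im (v$i)"] i unfolding Ip_def by blast
  ultimately show ?thesis by (simp add: vec_eq_iff complex_eq_iff)
qed

lemma lcv_inj: "lcv v = lcv w \<Longrightarrow> v = w"
proof -
  assume "lcv v = lcv w"
  then have "lcv (v - w) = 0"
    by (simp add: lcv_def cscale_diff_left sum_subtractf)
  then have "v - w = 0" by (rule lcv_zero)
  then show ?thesis by simp
qed

lemma herm_VC: assumes "X \<in> VC" "adjoint X = X" shows "X \<in> VR"
proof -
  obtain v where v: "X = lcv v" using assms(1) VC_eq by auto
  have "adjoint (lcv v) = lcv v" using assms(2) v by simp
  then have "Rp v - cscale \<i> (Ip v) = lcv v" by (simp only: lcv_adj)
  then have e: "Rp v - cscale \<i> (Ip v) = Rp v + cscale \<i> (Ip v)" by (simp only: lcv_decomp)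
  have d: "(Rp v + cscale \<i> (Ip v)) - (Rp v - cscale \<i> (Ip v)) = (2::real) *\<^sub>R cscale \<i> (Ip v)"
    by (simp add: scaleR_2)
  have "(Rp v + cscale \<i> (Ip v)) - (Rp v - cscale \<i> (Ip v)) = 0" by (simp only: e diff_self)
  then have "(2::real) *\<^sub>R cscale \<i> (Ip v) = 0" using d by simp
  then have "cscale \<i> (Ip v) = 0" by simp
  then have "Ip v = 0" by (rule cscale_i_zero)
  then show ?thesis using v by (simp add: lcv_decomp Rp_in)
qed

lemma VR_sub_VC: "VR \<subseteq> VC"
proof
  fix X assume "X \<in> VR"
  then have "X \<in> range (\<lambda>c. \<Sum>i\<in>UNIV. c i *\<^sub>R L i)" by (simp only: rspan_range)
  then obtain c where "X = (\<Sum>i\<in>UNIV. c i *\<^sub>R L i)" by blast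
  then have "X = (\<Sum>i\<in>UNIV. cscale (of_real (c i)) (L i))" by (simp add: cscale_of_real)
  then show "X \<in> VC" by (simp add: cspan_lin L_in)
qed

lemma D_scaleR: "D (r *\<^sub>R X) = r *\<^sub>R D X" by (simp add: scaleR_cscale D_cscale)

lemma W_eq: "span (range dr) = S ` VR"
proof -
  have "S (\<Sum>i\<in>UNIV. c i *\<^sub>R L i) = (\<Sum>i\<in>UNIV. c i *\<^sub>R dr i)" for c
    by (simp add: Tab_sum Tab_scaleR S_L)
  then show ?thesis unfolding rspan_range image_image by simp
qed

lemma part1: "D_invariant rho (span (range dr)) \<longleftrightarrow> D_invariant rho VR"
proof
  assume a: "D_invariant rho (span (range dr))"
  show "D_invariant rho VR" unfolding D_invariant_def
  proof clarify
    fix Y assume "Y \<in> VR"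
    then have "S Y \<in> span (range dr)" using W_eq by auto
    then have "D (S Y) \<in> span (range dr)" using a unfolding D_invariant_def by auto
    then have "S (D Y) \<in> S ` VR" unfolding W_eq S_D_comm .
    then show "D Y \<in> VR" using S_inj by auto
  qed
next
  assume a: "D_invariant rho VR"
  show "D_invariant rho (span (range dr))" unfolding D_invariant_def
  proof clarify
    fix X assume "X \<in> span (range dr)"
    then obtain Y where Y: "Y \<in> VR" "X = S Y" using W_eq by auto
    then have "D Y \<in> VR" using a unfolding D_invariant_def by auto
    then have "S (D Y) \<in> S ` VR" by (rule imageI)
    then show "D X \<in> span (range dr)" unfolding Y(2) W_eq S_D_comm .
  qed
qed

lemma part2: "D_invariant rho VR \<longleftrightarrow> D_invariant rho VC"
proof
  assume a: "D_invariant rho VR"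
  show "D_invariant rho VC" unfolding D_invariant_def
  proof clarify
    fix X assume "X \<in> VC"
    then obtain v where v: "X = lcv v" using VC_eq by auto
    have "D (L i) \<in> VC" for i
    proof -
      have "L i \<in> VR" by (intro span_base) auto
      then have "D (L i) \<in> VR" using a unfolding D_invariant_def by auto
      then show ?thesis using VR_sub_VC by auto
    qed
    then show "D X \<in> VC" unfolding v lcv_def D_lin by (rule cspan_lin)
  qed
next
  assume a: "D_invariant rho VC"
  show "D_invariant rho VR" unfolding D_invariant_def
  proof clarify
    fix X assume "X \<in> VR"
    then have "X \<in> range (\<lambda>c. \<Sum>i\<in>UNIV. c i *\<^sub>R L i)" by (simp only: rspan_range)
    then obtain c where c: "X = (\<Sum>i\<in>UNIV. c i *\<^sub>R L i)" by blast
    have "D (L i) \<in> VC" for i using a L_in unfolding D_invariant_def by auto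
    then have "D (L i) \<in> VR" for i using herm_VC D_herm L_herm by blast
    then show "D X \<in> VR" unfolding c D_sum D_scaleR by (intro span_sum span_scale) auto
  qed
qed

end

lemma mvec_column: "A *v column i B = column i (A ** B)"
  by (simp add: vec_eq_iff matrix_vector_mult_def matrix_matrix_mult_def column_def)
lemma column_mat1: "column i (mat 1 :: 'a::zero_neq_one^'n^'n) = axis i 1"
  by (simp add: vec_eq_iff mat_def axis_def column_def)

context sld begin

lemma lcv_add: "lcv (v + w) = lcv v + lcv w"
  by (simp add: lcv_def cscale_add_left sum.distrib)
lemma lcv_scale: "lcv (c *s v) = cscale c (lcv v)"
  by (simp add: lcv_def cscale_sum_right)
lemma lcv_0[simp]: "lcv 0 = 0" by (simp add: lcv_def)
lemma lcv_sum: "lcv (sum f A) = (\<Sum>x\<in>A. lcv (f x))"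
  by (induct A rule: infinite_finite_induct) (auto simp: lcv_add)
lemma lcv_axis: "lcv (axis j 1) = L j"
proof -
  have "lcv (axis j 1) = (\<Sum>i\<in>UNIV. if i = j then L j else 0)"
    unfolding lcv_def by (rule sum.cong) (auto simp: axis_def)
  then show ?thesis by simp
qed
lemma lcv_mult: "lcv (A *v v) = (\<Sum>j\<in>UNIV. cscale (v$j) (lcv (column j A)))"
  by (simp add: matrix_mult_sum lcv_sum lcv_scale)

lemma D_inv_from_L:
  assumes "\<And>j. D (L j) \<in> VC" shows "D_invariant rho VC"
  unfolding D_invariant_def
proof clarify
  fix X assume "X \<in> VC"
  then obtain v where v: "X = lcv v" using VC_eq by auto
  show "D X \<in> VC" unfolding v lcv_def D_lin by (rule cspan_lin) (rule assms)
qed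

lemma back_P:
  assumes b: "0 < b" "b \<le> 1" and h: "\<And>j. L j \<in> cspan (range (Lb b))"
  shows "D_invariant rho VC"
proof (rule D_inv_from_L)
  fix j
  have "L j \<in> range (\<lambda>c. \<Sum>i\<in>UNIV. cscale (c i) (Lb b i))"
    using h[of j] by (simp only: cspan_range)
  then obtain c where c: "L j = (\<Sum>i\<in>UNIV. cscale (c i) (Lb b i))" by blast
  have "E b (L j) = (\<Sum>i\<in>UNIV. cscale (c i) (L i))"
    unfolding c E_lin using b by (simp add: E_Lbeta)
  then have e: "E b (L j) \<in> VC" by (simp add: cspan_lin L_in)
  have ee: "E b (L j) - L j = cscale (\<i> * of_real b) (D (L j))" by (simp add: E_def)
  have c0: "\<i> * complex_of_real b \<noteq> 0" using b by simp
  have "D (L j) = cscale (inverse (\<i> * of_real b)) (cscale (\<i> * of_real b) (D (L j)))"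
    by (simp only: cscale_cscale left_inverse[OF c0] cscale_one)
  then have "D (L j) = cscale (inverse (\<i> * of_real b)) (E b (L j) - L j)"
    by (simp only: ee)
  moreover have "cscale (inverse (\<i> * of_real b)) (E b (L j) - L j) \<in> VC"
    by (rule cspan_scale, rule cspan_diff, rule e, rule L_in)
  ultimately show "D (L j) \<in> VC" by simp
qed

lemma forward:
  assumes P: "D_invariant rho VC" and b: "0 \<le> b" "b \<le> 1"
  shows "Lb b i \<in> VC" and "L j \<in> cspan (range (Lb b))"
proof -
  have "\<forall>j. \<exists>v. D (L j) = lcv v"
    using P L_in VC_eq unfolding D_invariant_def by blast
  then obtain Dm where Dm: "\<And>j. D (L j) = lcv (Dm j)" by metis
  define M :: "complex^'d^'d" where "M = (\<chi> k j. (if k = j then 1 else 0) + \<i> * of_real b * (Dm j)$k)"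
  have colM: "column j M = axis j 1 + (\<i> * of_real b) *s Dm j" for j
    by (simp add: M_def column_def vec_eq_iff axis_def)
  have EL: "E b (L j) = lcv (column j M)" for j
    by (simp add: colM lcv_add lcv_scale lcv_axis E_def Dm)
  have EM: "E b (lcv v) = lcv (M *v v)" for v
    by (simp add: lcv_mult lcv_def[of v] E_lin EL)
  have "\<forall>v. M *v v = 0 \<longrightarrow> v = 0"
  proof clarify
    fix v assume "M *v v = 0"
    then have "E b (lcv v) = 0" by (simp add: EM)
    then have "lcv v = 0" using E_inj0 b by blast
    then show "v = 0" by (rule lcv_zero)
  qed
  then obtain B where BM: "B ** M = mat 1" using matrix_left_invertible_ker by blast
  then have MB: "M ** B = mat 1" using matrix_left_right_inverse by blast
  have LbB: "Lb b i = lcv (column i B)" for i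
  proof (rule Lbeta_unique[OF b])
    have "T b (lcv (column i B)) = S (lcv (M *v column i B))" by (simp add: T_S_E EM)
    also have "\<dots> = dr i" by (simp add: mvec_column MB column_mat1 lcv_axis S_L)
    finally show "T b (lcv (column i B)) = dr i" .
  qed
  show "Lb b i \<in> VC" by (simp add: LbB lcv_in)
  have "L j = lcv (B *v column j M)" by (simp add: mvec_column BM column_mat1 lcv_axis)
  also have "\<dots> = (\<Sum>i\<in>UNIV. cscale ((column j M)$i) (Lb b i))" by (simp add: lcv_mult LbB)
  finally show "L j \<in> cspan (range (Lb b))" by (simp add: cspan_lin cspan_base)
qed

lemma part3: "D_invariant rho VC \<longleftrightarrow> (\<forall>b\<in>{0..1}. VC = cspan (range (Lb b)))"
proof
  assume P: "D_invariant rho VC"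
  show "\<forall>b\<in>{0..1}. VC = cspan (range (Lb b))"
  proof
    fix b :: real assume "b \<in> {0..1}"
    then have b: "0 \<le> b" "b \<le> 1" by auto
    show "VC = cspan (range (Lb b))"
    proof
      show "VC \<subseteq> cspan (range (Lb b))" by (rule cmod_span_range_sub) (rule forward(2)[OF P b])
      show "cspan (range (Lb b)) \<subseteq> VC" by (rule cmod_span_range_sub) (rule forward(1)[OF P b])
    qed
  qed
next
  assume "\<forall>b\<in>{0..1}. VC = cspan (range (Lb b))"
  then have "VC = cspan (range (Lb 1))" by auto
  then show "D_invariant rho VC" using L_in by (intro back_P[of 1]) auto
qed

end

lemma minv: "invertible A \<Longrightarrow> A ** matrix_inv A = mat 1 \<and> matrix_inv A ** A = mat 1"
  unfolding matrix_inv_def invertible_def by (rule someI_ex)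

lemma inv_from_ker: "(\<forall>x. A *v x = 0 \<longrightarrow> x = 0) \<Longrightarrow> invertible (A::'a::field^'n^'n)"
  using matrix_left_invertible_ker invertible_left_inverse by blast

lemma left_inv_unique: assumes "B ** A = mat 1" "invertible A" shows "B = matrix_inv A"
proof -
  have "B = B ** (A ** matrix_inv A)" using minv[OF assms(2)] by simp
  also have "\<dots> = matrix_inv A" by (simp add: matrix_mul_assoc assms(1))
  finally show ?thesis .
qed

lemma herm_inv: assumes "adjoint A = A" "invertible A" shows "adjoint (matrix_inv A) = matrix_inv A"
proof (rule left_inv_unique[OF _ assms(2)])
  have "adjoint (matrix_inv A) ** A = adjoint (A ** matrix_inv A)" by (simp add: adjoint_mult assms(1))
  then show "adjoint (matrix_inv A) ** A = mat 1" using minv[OF assms(2)] by simp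
qed

lemma mat1_nth: "(mat 1 :: 'a::zero_neq_one^'n^'n) $ i $ j = (if i = j then 1 else 0)"
  by (simp add: mat_def)

lemma herm_nth: "adjoint A = A \<Longrightarrow> cnj (A $ k $ i) = A $ i $ k"
  by (metis adjoint_nth)

context sld begin

definition G :: "real \<Rightarrow> complex^'n^'n \<Rightarrow> complex^'n^'n \<Rightarrow> complex" where
  "G b X Y = hs X (T b Y)"

definition lcb :: "real \<Rightarrow> complex^'d \<Rightarrow> complex^'n^'n" where
  "lcb b v = (\<Sum>i\<in>UNIV. cscale (v$i) (Lb b i))"

lemma G_lin_right: "G b X (\<Sum>k\<in>UNIV. cscale (c k) (f k)) = (\<Sum>k\<in>UNIV. c k * G b X (f k))"
  by (simp add: G_def Tab_sum Tab_cscale hs_sum_right hs_cscale_right)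
lemma G_lin_left: "G b (\<Sum>k\<in>UNIV. cscale (c k) (f k)) Y = (\<Sum>k\<in>UNIV. cnj (c k) * G b (f k) Y)"
  by (simp add: G_def hs_sum_left hs_cscale_left)
lemma G_add_left: "G b (X + X') Y = G b X Y + G b X' Y" by (simp add: G_def hs_add_left)
lemma G_add_right: "G b X (Y + Y') = G b X Y + G b X Y'" by (simp add: G_def hs_add_right Tab_add)
lemma G_diff_left: "G b (X - X') Y = G b X Y - G b X' Y" by (simp add: G_def hs_diff_left)
lemma G_diff_right: "G b X (Y - Y') = G b X Y - G b X Y'" by (simp add: G_def hs_diff_right Tab_diff)
lemma G_herm: "G b X Y = cnj (G b Y X)" by (simp add: G_def hs_Tab_herm[of X])

lemma G_pos: assumes "0 \<le> b" "b \<le> 1" "G b X X = 0" shows "X = 0"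
proof (rule ccontr)
  assume "X \<noteq> 0"
  then have "0 < Re (G b X X)" unfolding G_def using pos_ab[OF assms(1,2)] hs_Tab_pos by blast
  then show False using assms(3) by simp
qed

lemma G_Lb: "0 \<le> b \<Longrightarrow> b \<le> 1 \<Longrightarrow> G b X (Lb b j) = G 0 X (L j)"
  by (simp add: G_def Lbeta_eq Lbeta0_eq)

lemma inner_beta_G: "inner_beta b rho X Y = G b X Y"
proof -
  have "(1 + b) *\<^sub>R (rho ** Y) + (1 - b) *\<^sub>R (Y ** rho) = 2 *\<^sub>R T b Y"
  proof -
    have "2 * ((1 + b) / 2) = 1 + b" "2 * ((1 - b) / 2) = 1 - b" by simp_all
    then show ?thesis unfolding Tab_def scaleR_add_right scaleR_scaleR by metis
  qed
  then show ?thesis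
    by (simp add: inner_beta_def G_def hs_def mmult_scaleR_right trace_scaleR)
qed

lemma Jbeta_nth: "Jbeta b rho dr $ i $ j = G b (Lb b i) (Lb b j)"
  by (simp add: Jbeta_def inner_beta_G)

lemma Jbeta_herm: "adjoint (Jbeta b rho dr) = Jbeta b rho dr"
  by (simp add: vec_eq_iff Jbeta_nth) (metis G_herm)

lemma lcb_zero: assumes b: "0 \<le> b" "b \<le> 1" and "lcb b v = 0" shows "v = 0"
proof -
  have "E b (lcb b v) = lcv v" unfolding lcb_def E_lin using b by (simp add: E_Lbeta lcv_def)
  then show ?thesis using assms(3) lcv_zero by simp
qed

lemma Jbeta_inv: assumes b: "0 \<le> b" "b \<le> 1" shows "invertible (Jbeta b rho dr)"
proof (rule inv_from_ker, clarify)
  fix v assume v: "Jbeta b rho dr *v v = 0"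
  have "(Jbeta b rho dr *v v) $ i = G b (Lb b i) (lcb b v)" for i
    by (simp add: matrix_vector_mult_def Jbeta_nth lcb_def G_lin_right mult.commute)
  then have "G b (Lb b i) (lcb b v) = 0" for i using v by simp
  moreover have "G b (lcb b v) Y = (\<Sum>k\<in>UNIV. cnj (v$k) * G b (Lb b k) Y)" for Y
    unfolding lcb_def by (rule G_lin_left)
  ultimately have "G b (lcb b v) (lcb b v) = 0" by simp
  then have "lcb b v = 0" using G_pos b by blast
  then show "v = 0" using lcb_zero b by blast
qed

end

context sld begin

definition "Zm = (\<chi> i j. trace (L i ** rho ** L j))"
definition "Mid b = Re_mat Zm + cscale (complex_of_real b * \<i>) (Im_mat Zm)"
definition "Ji = matrix_inv (Jbeta 0 rho dr)"
definition "Ki b = matrix_inv (Jbeta b rho dr)"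
definition "Rm b = Ji ** Mid b ** Ji"
definition "Xv i = lcv (column i Ji)"
definition "Yv b i = lcb b (column i (Ki b))"
definition "Dl b i = Xv i - Yv b i"

lemma trace_swap: "trace (L k ** (L l ** rho)) = cnj (trace (L k ** rho ** L l))"
proof -
  have "cnj (trace (L k ** rho ** L l)) = trace (L l ** rho ** L k)"
    by (simp add: trace_adjoint[symmetric] adjoint_mult L_herm matrix_mul_assoc)
  also have "\<dots> = trace (L k ** (L l ** rho))" by (rule trace_mul_sym)
  finally show ?thesis by simp
qed

lemma G_LL: "G b (L k) (L l) = Mid b $ k $ l"
proof -
  define z where "z = trace (L k ** rho ** L l)"
  have "G b (L k) (L l) = of_real ((1+b)/2) * z + of_real ((1-b)/2) * cnj z"
    by (simp add: G_def hs_def Tab_def L_herm matrix_add_ldistrib trace_add mmult_scaleR_right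
        trace_scaleR matrix_mul_assoc z_def trace_swap[simplified matrix_mul_assoc])
  also have "\<dots> = of_real (Re z) + of_real b * \<i> * of_real (Im z)"
    by (simp add: complex_eq_iff field_simps)
  finally show ?thesis by (simp add: Mid_def Re_mat_def Im_mat_def Zm_def z_def)
qed

lemma J_inv: "invertible (Jbeta 0 rho dr)" by (rule Jbeta_inv) simp_all
lemma Ji_herm: "adjoint Ji = Ji"
  unfolding Ji_def by (rule herm_inv[OF Jbeta_herm J_inv])
lemma Ki_herm: "0 \<le> b \<Longrightarrow> b \<le> 1 \<Longrightarrow> adjoint (Ki b) = Ki b"
  unfolding Ki_def using herm_inv Jbeta_herm Jbeta_inv by blast
lemma Ji_J: "Ji ** Jbeta 0 rho dr = mat 1"
  unfolding Ji_def using minv[OF J_inv] by blast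
lemma Ki_K: "0 \<le> b \<Longrightarrow> b \<le> 1 \<Longrightarrow> Ki b ** Jbeta b rho dr = mat 1"
  unfolding Ki_def using minv Jbeta_inv by blast

lemma sum_delta_mult: fixes f :: "'d \<Rightarrow> complex" shows "(\<Sum>k\<in>UNIV. f k * (if i = k then 1 else (0::complex))) = f i"
proof -
  have "(\<Sum>k\<in>UNIV. f k * (if i = k then 1 else (0::complex))) = (\<Sum>k\<in>UNIV. if k = i then f k else 0)"
    by (rule sum.cong) auto
  then show ?thesis by simp
qed

lemma Xv_expand: "Xv i = (\<Sum>k\<in>UNIV. cscale (Ji$k$i) (L k))"
  by (simp add: Xv_def lcv_def column_def)
lemma Yv_expand: "Yv b i = (\<Sum>k\<in>UNIV. cscale (Ki b $k$i) (Lb b k))"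
  by (simp add: Yv_def lcb_def column_def)

lemma lcb_in: "lcb b v \<in> cspan (range (Lb b))"
  unfolding lcb_def by (intro cspan_lin cspan_base) auto

lemma in_lcb: "W \<in> cspan (range (Lb b)) \<Longrightarrow> \<exists>v. W = lcb b v"
proof -
  assume "W \<in> cspan (range (Lb b))"
  then have "W \<in> range (\<lambda>c. \<Sum>i\<in>UNIV. cscale (c i) (Lb b i))" by (simp only: cspan_range)
  then obtain c where "W = (\<Sum>i\<in>UNIV. cscale (c i) (Lb b i))" by blast
  then have "W = lcb b (vec_lambda c)" by (simp add: lcb_def)
  then show ?thesis by blast
qed

context fixes b :: real assumes b0: "0 \<le> b" and b1: "b \<le> 1" begin

lemma Xv_pair: "G b (Xv i) (Lb b j) = (if i = j then 1 else 0)"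
proof -
  have "G b (Xv i) (Lb b j) = G 0 (Xv i) (L j)" using G_Lb b0 b1 by blast
  also have "\<dots> = (\<Sum>k\<in>UNIV. cnj (Ji$k$i) * G 0 (L k) (L j))"
    unfolding Xv_def lcv_def by (simp add: G_lin_left column_def)
  also have "\<dots> = (\<Sum>k\<in>UNIV. Ji$i$k * Jbeta 0 rho dr $ k $ j)"
    by (simp add: herm_nth[OF Ji_herm] Jbeta_nth)
  also have "\<dots> = (Ji ** Jbeta 0 rho dr) $ i $ j" by (simp add: mmult_nth)
  finally show ?thesis by (simp add: Ji_J mat1_nth)
qed

lemma Yv_pair: "G b (Yv b i) (Lb b j) = (if i = j then 1 else 0)"
proof -
  have "G b (Yv b i) (Lb b j) = (\<Sum>k\<in>UNIV. cnj (Ki b $k$i) * G b (Lb b k) (Lb b j))"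
    unfolding Yv_def lcb_def by (simp add: G_lin_left column_def)
  also have "\<dots> = (\<Sum>k\<in>UNIV. Ki b $i$k * Jbeta b rho dr $ k $ j)"
    by (simp add: herm_nth[OF Ki_herm[OF b0 b1]] Jbeta_nth)
  also have "\<dots> = (Ki b ** Jbeta b rho dr) $ i $ j" by (simp add: mmult_nth)
  finally show ?thesis by (simp add: Ki_K[OF b0 b1] mat1_nth)
qed

lemma Dl_pair: "G b (Dl b i) (Lb b j) = 0"
  by (simp add: Dl_def G_diff_left Xv_pair Yv_pair)

lemma Dl_orth: "G b (Dl b i) (lcb b v) = 0"
  unfolding lcb_def G_lin_right by (simp add: Dl_pair)

lemma Dl_orth': "G b (lcb b v) (Dl b i) = 0"
  using Dl_orth G_herm by (metis complex_cnj_zero)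

lemma Yv_Yv: "G b (Yv b i) (Yv b j) = Ki b $ i $ j"
proof -
  have "G b (Yv b i) (Yv b j) = (\<Sum>k\<in>UNIV. Ki b $ k $ j * G b (Yv b i) (Lb b k))"
    unfolding Yv_expand[of b j] G_lin_right by (simp add: mult.commute)
  also have "\<dots> = Ki b $ i $ j" by (simp add: Yv_pair sum_delta_mult)
  finally show ?thesis .
qed

lemma Xv_Xv: "G b (Xv i) (Xv j) = Rm b $ i $ j"
proof -
  have "G b (Xv i) (Xv j) = (\<Sum>k\<in>UNIV. cnj (Ji$k$i) * (\<Sum>l\<in>UNIV. Ji$l$j * G b (L k) (L l)))"
    unfolding Xv_expand[of i] G_lin_left unfolding Xv_expand[of j] G_lin_right ..
  also have "\<dots> = (\<Sum>k\<in>UNIV. \<Sum>l\<in>UNIV. Ji$i$k * Mid b $ k $ l * Ji$l$j)"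
    by (simp add: herm_nth[OF Ji_herm] G_LL sum_distrib_left mult_ac)
  also have "\<dots> = (\<Sum>l\<in>UNIV. \<Sum>k\<in>UNIV. Ji$i$k * Mid b $ k $ l * Ji$l$j)"
    by (rule sum.swap)
  also have "\<dots> = Rm b $ i $ j"
    by (simp add: Rm_def mmult_nth sum_distrib_right)
  finally show ?thesis .
qed

lemma Rm_Ki: "Rm b $ i $ j = Ki b $ i $ j + G b (Dl b i) (Dl b j)"
proof -
  have X: "Xv k = Yv b k + Dl b k" for k by (simp add: Dl_def)
  have "Rm b $ i $ j = G b (Yv b i + Dl b i) (Yv b j + Dl b j)" by (simp add: Xv_Xv[symmetric] X[symmetric])
  also have "\<dots> = G b (Yv b i) (Yv b j) + G b (Yv b i) (Dl b j) + G b (Dl b i) (Yv b j) + G b (Dl b i) (Dl b j)"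
    by (simp add: G_add_left G_add_right)
  also have "\<dots> = Ki b $ i $ j + G b (Dl b i) (Dl b j)"
  proof -
    have o1: "G b (Yv b i) (Dl b j) = 0" unfolding Yv_def by (rule Dl_orth')
    have o2: "G b (Dl b i) (Yv b j) = 0" unfolding Yv_def by (rule Dl_orth)
    show ?thesis by (simp add: Yv_Yv o1 o2)
  qed
  finally show ?thesis .
qed

lemma Ki_Rm_iff: "Ki b = Rm b \<longleftrightarrow> (\<forall>i. Dl b i = 0)"
proof
  assume "Ki b = Rm b"
  then have "G b (Dl b i) (Dl b i) = 0" for i using Rm_Ki[of i i] by simp
  then show "\<forall>i. Dl b i = 0" using G_pos b0 b1 by blast
next
  assume "\<forall>i. Dl b i = 0"
  then have "G b (Dl b i) (Dl b j) = 0" for i j by (simp add: G_def)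
  then show "Ki b = Rm b" by (simp add: vec_eq_iff Rm_Ki)
qed

lemma Dl_zero_iff: "Dl b i = 0 \<longleftrightarrow> Xv i \<in> cspan (range (Lb b))"
proof
  assume "Dl b i = 0"
  then have "Xv i = Yv b i" by (simp add: Dl_def)
  then show "Xv i \<in> cspan (range (Lb b))" by (simp add: Yv_def lcb_in)
next
  assume "Xv i \<in> cspan (range (Lb b))"
  then have "Dl b i \<in> cspan (range (Lb b))" unfolding Dl_def Yv_def by (intro cspan_diff lcb_in)
  then obtain v where v: "Dl b i = lcb b v" using in_lcb by blast
  have "G b (Dl b i) (Dl b i) = 0" using Dl_orth[of i v] v by metis
  then show "Dl b i = 0" using G_pos b0 b1 by blast
qed

end

lemma L_from_Xv: "L j = (\<Sum>i\<in>UNIV. cscale ((column j (Jbeta 0 rho dr))$i) (Xv i))"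
proof -
  have "L j = lcv (Ji *v column j (Jbeta 0 rho dr))" by (simp add: mvec_column Ji_J column_mat1 lcv_axis)
  then show ?thesis by (simp add: lcv_mult Xv_def)
qed

lemma part4: "D_invariant rho VC \<longleftrightarrow> (\<forall>b\<in>{0..1}. Ki b = Rm b)"
proof
  assume P: "D_invariant rho VC"
  show "\<forall>b\<in>{0..1}. Ki b = Rm b"
  proof
    fix b :: real assume "b \<in> {0..1}"
    then have b: "0 \<le> b" "b \<le> 1" by auto
    have "Xv i \<in> cspan (range (Lb b))" for i
      unfolding Xv_def lcv_def by (intro cspan_lin forward(2)[OF P b])
    then show "Ki b = Rm b" using Ki_Rm_iff[OF b] Dl_zero_iff[OF b] by blast
  qed
next
  assume "\<forall>b\<in>{0..1}. Ki b = Rm b"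
  then have "Ki 1 = Rm 1" by auto
  then have "Xv i \<in> cspan (range (Lb 1))" for i using Ki_Rm_iff[of 1] Dl_zero_iff[of 1] by auto
  then have "L j \<in> cspan (range (Lb 1))" for j unfolding L_from_Xv[of j] by (intro cspan_lin)
  then show "D_invariant rho VC" by (intro back_P[of 1]) auto
qed

end

lemma linear_adjoint: "linear (adjoint :: complex^'n^'m \<Rightarrow> complex^'m^'n)"
  by (rule linearI) (simp_all add: adjoint_add adjoint_scaleR)

lemma bounded_linear_adjoint: "bounded_linear (adjoint :: complex^'n^'m \<Rightarrow> complex^'m^'n)"
  using linear_adjoint linear_conv_bounded_linear by blast

lemma deriv_herm:
  fixes rf :: "real^'d \<Rightarrow> complex^'n^'n"
  assumes "open Theta" "th0 \<in> Theta" "\<forall>th\<in>Theta. hermitian (rf th)" "rf differentiable (at th0)"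
  shows "adjoint (pderiv_op rf th0 i) = pderiv_op rf th0 i"
proof -
  let ?f' = "frechet_derivative rf (at th0)"
  have h1: "(rf has_derivative ?f') (at th0)" using assms(4) frechet_derivative_works by blast
  have h2: "((\<lambda>x. adjoint (rf x)) has_derivative (\<lambda>h. adjoint (?f' h))) (at th0)"
    by (rule bounded_linear.has_derivative[OF bounded_linear_adjoint h1])
  have h3: "((\<lambda>x. adjoint (rf x)) has_derivative ?f') (at th0)"
    by (rule has_derivative_transform_within_open[OF h1 assms(1,2)])
       (use assms(3) in \<open>auto simp: hermitian_def\<close>)
  have "(\<lambda>h. adjoint (?f' h)) = ?f'" using has_derivative_unique[OF h2 h3] .
  then show ?thesis unfolding pderiv_op_def by metis
qed

theorem lemma11:
  fixes rf :: "real^'d \<Rightarrow> complex^'n^'n"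
    and Theta :: "(real^'d) set"
    and th0 :: "real^'d"
  defines "rho \<equiv> rf th0"
    and "dr \<equiv> pderiv_op rf th0"
    and "LS \<equiv> (\<lambda>i. Lbeta 0 (rf th0) (pderiv_op rf th0 i))"
  assumes Theta_open: "open Theta"
    and th0_in: "th0 \<in> Theta"
    and family_density: "\<forall>th\<in>Theta. density_op (rf th)"
    and family_diff: "\<forall>th\<in>Theta. rf differentiable (at th)"
    and rho_pos: "strictly_positive rho"
    and SLD_indep: "\<forall>c::'d \<Rightarrow> real. (\<Sum>i\<in>UNIV. c i *\<^sub>R LS i) = 0 \<longrightarrow> (\<forall>i. c i = 0)"
  shows
   "(D_invariant rho (span (range dr)) \<longleftrightarrow> D_invariant rho (span (range LS)))
  \<and> (D_invariant rho (span (range dr)) \<longleftrightarrow> D_invariant rho (cspan (range LS)))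
  \<and> (D_invariant rho (span (range dr)) \<longleftrightarrow>
       (\<forall>b\<in>{0..1}. cspan (range LS) = cspan (range (\<lambda>i. Lbeta b rho (dr i)))))
  \<and> (D_invariant rho (span (range dr)) \<longleftrightarrow>
       (\<forall>b\<in>{0..1}.
          matrix_inv (Jbeta b rho dr) =
            matrix_inv (Jbeta 0 rho dr)
            ** (Re_mat (\<chi> i j. trace (LS i ** rho ** LS j))
                + cscale (complex_of_real b * \<i>) (Im_mat (\<chi> i j. trace (LS i ** rho ** LS j))))
            ** matrix_inv (Jbeta 0 rho dr)))"
proof -
  have rho_herm: "hermitian rho" and rho_pos': "\<forall>x. x \<noteq> 0 \<longrightarrow> 0 < Re (qform rho x)"
    using rho_pos unfolding strictly_positive_def by auto
  interpret spos rho by unfold_locales (use rho_herm rho_pos' in auto)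
  have herm_all: "\<forall>th\<in>Theta. hermitian (rf th)" using family_density by (auto simp: density_op_def)
  have dr_herm: "adjoint (dr i) = dr i" for i
    unfolding dr_def using deriv_herm[OF Theta_open th0_in herm_all] family_diff th0_in by blast
  have LS_eq: "LS = (\<lambda>i. Lbeta 0 rho (dr i))" unfolding LS_def rho_def dr_def ..
  have indep': "\<forall>c::'d \<Rightarrow> real. (\<Sum>i\<in>UNIV. c i *\<^sub>R Lbeta 0 rho (dr i)) = 0 \<longrightarrow> (\<forall>i. c i = 0)"
    using SLD_indep unfolding LS_eq .
  interpret sld rho dr by unfold_locales (use dr_herm indep' in auto)
  have A: "D_invariant rho (span (range dr)) \<longleftrightarrow> D_invariant rho (span (range LS))"
    unfolding LS_eq by (rule part1)
  have B: "D_invariant rho (span (range dr)) \<longleftrightarrow> D_invariant rho (cspan (range LS))"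
    unfolding LS_eq using part1 part2 by blast
  have C: "D_invariant rho (span (range dr)) \<longleftrightarrow>
       (\<forall>b\<in>{0..1}. cspan (range LS) = cspan (range (\<lambda>i. Lbeta b rho (dr i))))"
    unfolding LS_eq using part1 part2 part3 by blast
  have D4: "D_invariant rho (span (range dr)) \<longleftrightarrow>
       (\<forall>b\<in>{0..1}.
          matrix_inv (Jbeta b rho dr) =
            matrix_inv (Jbeta 0 rho dr)
            ** (Re_mat (\<chi> i j. trace (LS i ** rho ** LS j))
                + cscale (complex_of_real b * \<i>) (Im_mat (\<chi> i j. trace (LS i ** rho ** LS j))))
            ** matrix_inv (Jbeta 0 rho dr))"
    unfolding LS_eq using part1 part2 part4[unfolded Ki_def Rm_def Ji_def Mid_def Zm_def] by blast
  show ?thesis using A B C D4 by blast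
qed

end
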